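(* For the submodule $M=[(z-w)^2]$ of $H^2(\mathbb D^2)$, \[ \Sigma_2(M)=\sum_{n=0}^\infty|\langle w^2\phi_n,z^2\psi_n\rangle|^2=\frac{178}{3}\pi^2-585. \]
   Context: $H^2(\mathbb D^2)$ is the Hardy space on the bidisk (monomials $z^aw^b$ orthonormal), $[q]$ the smallest closed subspace containing $q$ and invariant under multiplication by $z$ and $w$. Let $p=(z-w)^2$. For $n\ge0$ let $A^n=(a_{i,j})_{i,j=0}^n$ with $a_{i,j}=\langle pw^{|i-j|},pz^{|i-j|}\rangle$ (this is the symmetric pentadiagonal Toeplitz matrix with diagonal $6$, first off-diagonals $-4$, second off-diagonals $1$); $D_0=1$, $D_n=\det A^{n-1}$ ($n\ge1$); $A^n_{i,j}$ is the $(i,j)$ cofactor ($(-1)^{i+j}$ times the minor deleting row $i$ and column $j$). Define $\phi_0=\psi_0=p/\|p\|$ and for $n\ge1$ \[ \phi_n=\frac{\sum_{j=0}^n pA^n_{0,j}z^jw^{n-j}}{\sqrt{D_{n+1}D_n}},\qquad \psi_n=\frac{\sum_{j=0}^n pA^n_{n,j}z^jw^{n-j}}{\sqrt{D_{n+1}D_n}}; \] these form orthonormal bases of $M\ominus zM$ and $M\ominus wM$ respectively. For $k\ge0$, $\Sigma_k(M):=\sum_{n\ge0}|\langle w^k\phi_n,z^k\psi_n\rangle|^2$. *)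

theory Defs
  imports "Jordan_Normal_Form.Determinant" "HOL-Analysis.Infinite_Sum"
begin

text \<open>Polynomials in two variables z, w are represented by their coefficient
  functions: f a b is the coefficient of z^a w^b.  Monomials are orthonormal
  in the Hardy space of the bidisk, so the inner product is the (here real,
  all coefficients being real) sum of products of coefficients.\<close>

type_synonym poly2 = "nat \<Rightarrow> nat \<Rightarrow> real"

definition H2_inner :: "poly2 \<Rightarrow> poly2 \<Rightarrow> real" where
  "H2_inner f g = (\<Sum>\<^sub>\<infinity>(a,b)\<in>UNIV. f a b * g a b)"

definition H2_norm :: "poly2 \<Rightarrow> real" where
  "H2_norm f = sqrt (H2_inner f f)"

definition pmul :: "poly2 \<Rightarrow> poly2 \<Rightarrow> poly2" where
  "pmul f g = (\<lambda>a b. \<Sum>i\<le>a. \<Sum>j\<le>b. f i j * g (a - i) (b - j))"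

definition pscale :: "real \<Rightarrow> poly2 \<Rightarrow> poly2" where
  "pscale c f = (\<lambda>a b. c * f a b)"

definition padd :: "poly2 \<Rightarrow> poly2 \<Rightarrow> poly2" where
  "padd f g = (\<lambda>a b. f a b + g a b)"

definition mono :: "nat \<Rightarrow> nat \<Rightarrow> poly2" where
  "mono i j = (\<lambda>a b. if a = i \<and> b = j then 1 else 0)"

definition pp :: poly2 where
  "pp = pmul (padd (mono 1 0) (pscale (-1) (mono 0 1)))
             (padd (mono 1 0) (pscale (-1) (mono 0 1)))"

definition Amat :: "nat \<Rightarrow> real mat" where
  "Amat n = mat (n+1) (n+1) (\<lambda>(i,j).
      (let d = (if i \<le> j then j - i else i - j)
       in H2_inner (pmul pp (mono 0 d)) (pmul pp (mono d 0))))"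

definition Dd :: "nat \<Rightarrow> real" where
  "Dd n = (if n = 0 then 1 else det (Amat (n - 1)))"

definition phi :: "nat \<Rightarrow> poly2" where
  "phi n = (if n = 0 then pscale (1 / H2_norm pp) pp
            else pscale (1 / sqrt (Dd (n+1) * Dd n))
              (\<lambda>a b. \<Sum>j\<le>n. cofactor (Amat n) 0 j * pmul pp (mono j (n - j)) a b))"

definition psi :: "nat \<Rightarrow> poly2" where
  "psi n = (if n = 0 then pscale (1 / H2_norm pp) pp
            else pscale (1 / sqrt (Dd (n+1) * Dd n))
              (\<lambda>a b. \<Sum>j\<le>n. cofactor (Amat n) n j * pmul pp (mono j (n - j)) a b))"

definition Sigma_term :: "nat \<Rightarrow> nat \<Rightarrow> real" where
  "Sigma_term k n = (H2_inner (pmul (mono 0 k) (phi n)) (pmul (mono k 0) (psi n)))\<^sup>2"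

end

theory Submission
  imports Defs "HOL-Analysis.Gamma_Function"
begin


definition tt :: "nat \<Rightarrow> real" where
  "tt d = (if d = 0 then 6 else if d = 1 then -4 else if d = 2 then 1 else 0)"

definition dst :: "nat \<Rightarrow> nat \<Rightarrow> nat" where
  "dst i j = (if i \<le> j then j - i else i - j)"

definition Q :: "nat \<Rightarrow> nat \<Rightarrow> poly2" where
  "Q a b = pmul pp (mono a b)"

lemma sd: "(\<Sum>j\<le>(y::nat). if j = q then c else 0) = (if q \<le> y then c else (0::real))"
  by (induct y) auto

lemma sum_delta2:
  "(\<Sum>i\<le>(x::nat). \<Sum>j\<le>(y::nat). (if i = p \<and> j = q then h i j else 0)) = (if p \<le> x \<and> q \<le> y then h p q else (0::real))"
proof -
  have "(\<Sum>i\<le>x. \<Sum>j\<le>y. (if i = p \<and> j = q then h i j else 0)) =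
        (\<Sum>i\<le>x. if i = p then (if q \<le> y then h p q else 0) else 0)"
  proof (intro sum.cong refl)
    fix i assume "i \<in> {..x}"
    have "(\<Sum>j\<le>y. (if i = p \<and> j = q then h i j else 0)) = (\<Sum>j\<le>y. if i = p then (if j = q then h p q else 0) else 0)"
      by (intro sum.cong refl) auto
    also have "\<dots> = (if i = p then (\<Sum>j\<le>y. if j = q then h p q else 0) else 0)" by simp
    also have "\<dots> = (if i = p then (if q \<le> y then h p q else 0) else 0)"
      by (simp only: sd)
    finally show "(\<Sum>j\<le>y. (if i = p \<and> j = q then h i j else 0)) = (if i = p then (if q \<le> y then h p q else 0) else 0)" .
  qed
  also have "\<dots> = (if p \<le> x \<and> q \<le> y then h p q else 0)"
    by (simp add: sum.delta)
  finally show ?thesis .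
qed

lemma pmul_mono_left:
  "pmul (mono p q) g x y = (if p \<le> x \<and> q \<le> y then g (x - p) (y - q) else 0)"
proof -
  have "pmul (mono p q) g x y = (\<Sum>i\<le>x. \<Sum>j\<le>y. (if i = p \<and> j = q then g (x - i) (y - j) else 0))"
    unfolding pmul_def mono_def by (intro sum.cong refl) auto
  then show ?thesis by (simp add: sum_delta2)
qed

lemma pmul_mono_right:
  "pmul g (mono p q) x y = (if p \<le> x \<and> q \<le> y then g (x - p) (y - q) else 0)"
proof -
  have "pmul g (mono p q) x y = (\<Sum>i\<le>x. \<Sum>j\<le>y. (if i = x - p \<and> j = y - q then
      (if p \<le> x \<and> q \<le> y then g i j else 0) else 0))"
    unfolding pmul_def mono_def by (intro sum.cong refl) auto
  then show ?thesis by (simp add: sum_delta2)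
qed

lemma pp_expl:
  "pp x y = (if x = 2 \<and> y = 0 then 1 else 0) - 2 * (if x = 1 \<and> y = 1 then 1 else 0)
            + (if x = 0 \<and> y = 2 then 1 else 0)"
proof -
  define f :: poly2 where "f = padd (mono 1 0) (pscale (-1) (mono 0 1))"
  have f: "f = (\<lambda>x y. (if x = 1 \<and> y = 0 then 1 else 0) - (if x = 0 \<and> y = 1 then 1 else 0))"
    unfolding f_def padd_def pscale_def mono_def by (auto simp: fun_eq_iff)
  have "pmul f f x y = (\<Sum>i\<le>x. \<Sum>j\<le>y. (if i = 1 \<and> j = 0 then f (x - i) (y - j) else 0))
      - (\<Sum>i\<le>x. \<Sum>j\<le>y. (if i = 0 \<and> j = 1 then f (x - i) (y - j) else 0))"
    unfolding pmul_def by (subst f) (simp add: sum_subtractf[symmetric] left_diff_distrib, intro sum.cong refl, auto)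
  also have "\<dots> = (if 1 \<le> x then f (x - 1) y else 0) - (if 1 \<le> y then f x (y - 1) else 0)"
    by (simp only: sum_delta2) simp
  finally have "pp x y = (if 1 \<le> x then f (x - 1) y else 0) - (if 1 \<le> y then f x (y - 1) else 0)"
    unfolding pp_def f_def .
  then show ?thesis by (auto simp: f)
qed

lemma Q_expl:
  "Q a b x y = (if x = a + 2 \<and> y = b then 1 else 0) - 2 * (if x = a + 1 \<and> y = b + 1 then 1 else 0)
            + (if x = a \<and> y = b + 2 then 1 else 0)"
  unfolding Q_def pmul_mono_right pp_expl by auto

lemma Q_shift_w: "(if 2 \<le> y then Q a b x (y - 2) else 0) = Q a (b + 2) x y"
  unfolding Q_expl by auto

lemma Q_shift_z: "(if 2 \<le> x then Q a b (x - 2) y else 0) = Q (a + 2) b x y"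
  unfolding Q_expl by auto

lemma Q_supp: "Q a b x y \<noteq> 0 \<Longrightarrow> x + y = a + b + 2"
  unfolding Q_expl by (auto split: if_splits)

lemma Q0: "Q 0 0 = pp"
  unfolding Q_def by (auto simp: fun_eq_iff pmul_mono_right)

lemma H2_inner_fin:
  assumes "finite S" "\<And>x y. (x, y) \<notin> S \<Longrightarrow> f x y * g x y = 0"
  shows "H2_inner f g = (\<Sum>z\<in>S. f (fst z) (snd z) * g (fst z) (snd z))"
proof -
  have "H2_inner f g = infsum (\<lambda>z. f (fst z) (snd z) * g (fst z) (snd z)) S"
    unfolding H2_inner_def
    by (rule infsum_cong_neutral) (use assms(2) in \<open>auto simp: case_prod_beta\<close>)
  also have "\<dots> = (\<Sum>z\<in>S. f (fst z) (snd z) * g (fst z) (snd z))"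
    using assms(1) by simp
  finally show ?thesis .
qed

definition bx :: "nat \<Rightarrow> (nat \<times> nat) set" where "bx N = {..N} \<times> {..N}"

lemma gram:
  assumes "a + b = c + d" "a + b + 2 \<le> N"
  shows "(\<Sum>z\<in>bx N. Q a b (fst z) (snd z) * Q c d (fst z) (snd z)) = tt (dst a c)"
proof -
  define G where "G z = Q c d (fst z) (snd z)" for z
  have e: "Q a b (fst z) (snd z) * G z = (if z = (a+2, b) then G z else 0) - 2 * (if z = (a+1, b+1) then G z else 0)
     + (if z = (a, b+2) then G z else 0)" for z
    unfolding Q_expl by (cases z) auto
  have "(\<Sum>z\<in>bx N. Q a b (fst z) (snd z) * G z) = G (a+2, b) - 2 * G (a+1, b+1) + G (a, b+2)"
    unfolding e using assms(2)
    by (simp add: sum.distrib sum_subtractf sum_distrib_left[symmetric] bx_def)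
  also have "\<dots> = tt (dst a c)"
    unfolding G_def Q_expl tt_def dst_def using assms(1) by auto
  finally show ?thesis unfolding G_def .
qed

lemma H2_Q:
  assumes "a + b = c + d"
  shows "H2_inner (Q a b) (Q c d) = tt (dst a c)"
proof -
  have "H2_inner (Q a b) (Q c d) = (\<Sum>z\<in>bx (a+b+2). Q a b (fst z) (snd z) * Q c d (fst z) (snd z))"
  proof (rule H2_inner_fin)
    fix x y assume "(x, y) \<notin> bx (a + b + 2)"
    have "Q a b x y = 0"
    proof (rule ccontr)
      assume "Q a b x y \<noteq> 0"
      then have "x + y = a + b + 2" by (rule Q_supp)
      with \<open>(x, y) \<notin> bx (a + b + 2)\<close> show False by (auto simp: bx_def)
    qed
    then show "Q a b x y * Q c d x y = 0" by simp
  qed (simp add: bx_def)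
  also have "\<dots> = tt (dst a c)" using assms by (intro gram) auto
  finally show ?thesis .
qed

lemma Amat_index:
  assumes "i \<le> n" "j \<le> n"
  shows "Amat n $$ (i, j) = tt (dst i j)"
proof -
  have "H2_inner (pmul pp (mono 0 d)) (pmul pp (mono d 0)) = tt d" for d
    using H2_Q[of 0 d d 0] unfolding Q_def by (simp add: dst_def)
  then show ?thesis using assms unfolding Amat_def by (simp add: Let_def dst_def)
qed

lemma Amat_carrier: "Amat n \<in> carrier_mat (n+1) (n+1)"
  unfolding Amat_def by simp

lemma H2_norm_pp: "H2_norm pp = sqrt 6"
  unfolding H2_norm_def using H2_Q[of 0 0 0 0] by (simp add: Q0 tt_def dst_def)




lemma sd2: "(\<Sum>j\<le>(n::nat). if j = a then g j else 0) = (if a \<le> n then g a else (0::real))"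
  by (simp add: sum.delta)

lemma row5:
  "(\<Sum>j\<le>n. tt (dst i j) * f j) =
     (if 2 \<le> i \<and> i - 2 \<le> n then f (i - 2) else 0) - 4 * (if 1 \<le> i \<and> i - 1 \<le> n then f (i - 1) else 0)
   + 6 * (if i \<le> n then f i else 0) - 4 * (if i + 1 \<le> n then f (i + 1) else 0)
   + (if i + 2 \<le> n then f (i + 2) else (0::real))"
proof -
  have pw: "tt (dst i j) * f j =
      (if j = i - 2 then (if 2 \<le> i then f j else 0) else 0) - 4 * (if j = i - 1 then (if 1 \<le> i then f j else 0) else 0)
    + 6 * (if j = i then f j else 0) - 4 * (if j = i + 1 then f j else 0) + (if j = i + 2 then f j else 0)" for j
  proof -
    consider "j + 2 = i" | "j + 1 = i" | "j = i" | "j = i + 1" | "j = i + 2" | "j + 2 < i \<or> j > i + 2" by linarith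
    then show ?thesis
    proof cases
      case 1
      have f0: "dst i j = 2" using 1 unfolding dst_def by arith
      have f1: "j = i - 2" using 1 unfolding dst_def by arith
      have f2: "2 \<le> i" using 1 unfolding dst_def by arith
      have f3: "j \<noteq> i - 1" using 1 unfolding dst_def by arith
      have f4: "j \<noteq> i" using 1 unfolding dst_def by arith
      have f5: "j \<noteq> i + 1" using 1 unfolding dst_def by arith
      have f6: "j \<noteq> i + 2" using 1 unfolding dst_def by arith
      then show ?thesis using 1 f0 f1 f2 f3 f4 f5 f6 by (simp add: tt_def)
    next
      case 2
      have f0: "dst i j = 1" using 2 unfolding dst_def by arith
      have f1: "j = i - 2 \<longrightarrow> \<not> 2 \<le> i" using 2 unfolding dst_def by arith
      have f2: "j = i - 1" using 2 unfolding dst_def by arith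
      have f3: "1 \<le> i" using 2 unfolding dst_def by arith
      have f4: "j \<noteq> i" using 2 unfolding dst_def by arith
      have f5: "j \<noteq> i + 1" using 2 unfolding dst_def by arith
      have f6: "j \<noteq> i + 2" using 2 unfolding dst_def by arith
      then show ?thesis using 2 f0 f1 f2 f3 f4 f5 f6 by (simp add: tt_def)
    next
      case 3
      have f0: "dst i j = 0" using 3 unfolding dst_def by arith
      have f1: "j = i - 2 \<longrightarrow> \<not> 2 \<le> i" using 3 unfolding dst_def by arith
      have f2: "j = i - 1 \<longrightarrow> \<not> 1 \<le> i" using 3 unfolding dst_def by arith
      have f3: "j \<noteq> i + 1" using 3 unfolding dst_def by arith
      have f4: "j \<noteq> i + 2" using 3 unfolding dst_def by arith
      then show ?thesis using 3 f0 f1 f2 f3 f4 by (simp add: tt_def)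
    next
      case 4
      have f0: "dst i j = 1" using 4 unfolding dst_def by arith
      have f1: "j \<noteq> i - 2" using 4 unfolding dst_def by arith
      have f2: "j \<noteq> i - 1" using 4 unfolding dst_def by arith
      have f3: "j \<noteq> i" using 4 unfolding dst_def by arith
      have f4: "j = i + 1" using 4 unfolding dst_def by arith
      have f5: "j \<noteq> i + 2" using 4 unfolding dst_def by arith
      then show ?thesis using 4 f0 f1 f2 f3 f4 f5 by (simp add: tt_def)
    next
      case 5
      have f0: "dst i j = 2" using 5 unfolding dst_def by arith
      have f1: "j \<noteq> i - 2" using 5 unfolding dst_def by arith
      have f2: "j \<noteq> i - 1" using 5 unfolding dst_def by arith
      have f3: "j \<noteq> i" using 5 unfolding dst_def by arith
      have f4: "j \<noteq> i + 1" using 5 unfolding dst_def by arith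
      have f5: "j = i + 2" using 5 unfolding dst_def by arith
      then show ?thesis using 5 f0 f1 f2 f3 f4 f5 by (simp add: tt_def)
    next
      case 6
      have f0: "dst i j > 2" using 6 unfolding dst_def by arith
      have f1: "j = i - 2 \<longrightarrow> \<not> 2 \<le> i" using 6 unfolding dst_def by arith
      have f2: "j = i - 1 \<longrightarrow> \<not> 1 \<le> i" using 6 unfolding dst_def by arith
      have f3: "j \<noteq> i" using 6 unfolding dst_def by arith
      have f4: "j \<noteq> i + 1" using 6 unfolding dst_def by arith
      have f5: "j \<noteq> i + 2" using 6 unfolding dst_def by arith
      then show ?thesis using 6 f0 f1 f2 f3 f4 f5 by (simp add: tt_def)
    qed
  qed
  show ?thesis
    unfolding pw by (simp add: sum.distrib sum_subtractf sum_distrib_left[symmetric] sd2 del: sum.delta)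
qed

definition vv :: "real \<Rightarrow> real \<Rightarrow> real" where
  "vv n t = (t + 1) * (n + 1 - t) * (n + 2 - t) / ((n + 3) * (n + 4))"

definition vN :: "nat \<Rightarrow> nat \<Rightarrow> real" where "vN n j = vv (real n) (real j)"
definition uN :: "nat \<Rightarrow> nat \<Rightarrow> real" where "uN n j = vv (real n) (real n - real j)"

lemma vv4: "vv m (a - 2) - 4 * vv m (a - 1) + 6 * vv m a - 4 * vv m (a + 1) + vv m (a + 2) = 0"
proof -
  have "vv m (a - 2) - 4 * vv m (a - 1) + 6 * vv m a - 4 * vv m (a + 1) + vv m (a + 2) =
    ((a - 2 + 1) * (m + 1 - (a - 2)) * (m + 2 - (a - 2)) - 4 * ((a - 1 + 1) * (m + 1 - (a - 1)) * (m + 2 - (a - 1)))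
     + 6 * ((a + 1) * (m + 1 - a) * (m + 2 - a)) - 4 * ((a + 1 + 1) * (m + 1 - (a + 1)) * (m + 2 - (a + 1)))
     + (a + 2 + 1) * (m + 1 - (a + 2)) * (m + 2 - (a + 2))) / ((m + 3) * (m + 4))"
    unfolding vv_def by (simp only: add_divide_distrib diff_divide_distrib times_divide_eq_right)
  also have "\<dots> = 0 / ((m + 3) * (m + 4))"
    by (rule arg_cong[where f="\<lambda>t. t / ((m + 3) * (m + 4))"]) (simp add: algebra_simps)
  finally show ?thesis by simp
qed

lemma rowv:
  assumes "i \<le> n"
  shows "(\<Sum>j\<le>n. tt (dst i j) * vN n j) = (if i = 0 then 1 else 0)"
proof -
  have z1: "vN n (n+1) = 0" and z2: "vN n (n+2) = 0" unfolding vN_def vv_def by simp_all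
  have g1: "(if i + 1 \<le> n then vN n (i+1) else 0) = vN n (i+1)"
    using assms z1 by (cases "i = n") auto
  have g2: "(if i + 2 \<le> n then vN n (i+2) else 0) = vN n (i+2)"
  proof -
    have "i + 2 \<le> n \<or> i + 2 = n + 1 \<or> i + 2 = n + 2" using assms by linarith
    then show ?thesis using z1 z2 by auto
  qed
  have pos: "real n + 3 \<noteq> 0" "real n + 4 \<noteq> 0" by linarith+
  consider "i = 0" | "i = 1" | "i \<ge> 2" by linarith
  then show ?thesis
  proof cases
    case 1
    have "6 * ((real n + 1) * (real n + 2)) - 8 * (real n * (1 + real n)) +
     (3 * real n - 3) * real n = (real n + 3) * (real n + 4)" by (simp add: algebra_simps)
    then show ?thesis unfolding row5 g1 g2 using pos 1
      by (simp add: vN_def vv_def divide_simps)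
  next
    case 2
    then show ?thesis unfolding row5 g1 g2 using pos assms
      by (simp add: vN_def vv_def divide_simps) (simp add: algebra_simps)
  next
    case 3
    then have r: "real (i - 2) = real i - 2" "real (i - 1) = real i - 1" by auto
    have c: "2 \<le> i \<and> i - 2 \<le> n" "1 \<le> i \<and> i - 1 \<le> n" "i \<le> n" "i \<noteq> 0" using 3 assms by auto
    have e1: "(if 2 \<le> i \<and> i - 2 \<le> n then vN n (i - 2) else 0) = vv (real n) (real i - 2)"
      using c r by (simp add: vN_def)
    have e2: "(if 1 \<le> i \<and> i - 1 \<le> n then vN n (i - 1) else 0) = vv (real n) (real i - 1)"
      using c r by (simp add: vN_def)
    have e3: "(if i \<le> n then vN n i else 0) = vv (real n) (real i)"
      using c by (simp add: vN_def)
    have e4: "vN n (i + 1) = vv (real n) (real i + 1)" by (simp add: vN_def add.commute)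
    have e5: "vN n (i + 2) = vv (real n) (real i + 2)" by (simp add: vN_def add.commute)
    show ?thesis unfolding row5 g1 g2 unfolding e1 e2 e3 e4 e5 using vv4[of "real n" "real i"] c by simp
  qed
qed

lemma sum_rev: "(\<Sum>j\<le>(n::nat). g j) = (\<Sum>j\<le>n. g (n - j))"
  by (rule sum.reindex_bij_witness[where i="\<lambda>j. n - j" and j="\<lambda>j. n - j"]) auto

lemma rowu:
  assumes "i \<le> n"
  shows "(\<Sum>j\<le>n. tt (dst i j) * uN n j) = (if i = n then 1 else 0)"
proof -
  have "(\<Sum>j\<le>n. tt (dst i j) * uN n j) = (\<Sum>j\<le>n. tt (dst i (n - j)) * uN n (n - j))"
    by (rule sum_rev)
  also have "\<dots> = (\<Sum>j\<le>n. tt (dst (n - i) j) * vN n j)"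
  proof (intro sum.cong refl)
    fix j assume "j \<in> {..n}"
    then have j: "j \<le> n" by simp
    then have "dst i (n - j) = dst (n - i) j" using assms unfolding dst_def by auto
    moreover have "uN n (n - j) = vN n j" using j unfolding uN_def vN_def by (simp add: of_nat_diff)
    ultimately show "tt (dst i (n - j)) * uN n (n - j) = tt (dst (n - i) j) * vN n j" by simp
  qed
  also have "\<dots> = (if i = n then 1 else 0)" using rowv[of "n - i" n] assms by auto
  finally show ?thesis .
qed

lemma cof_sol:
  fixes A :: "real mat"
  assumes A: "A \<in> carrier_mat N N" and r: "r < N"
    and sol: "\<And>i. i < N \<Longrightarrow> (\<Sum>j<N. A $$ (i, j) * x j) = (if i = r then 1 else 0)"
    and l: "l < N"
  shows "cofactor A r l = det A * x l"
proof -
  have adj: "adj_mat A * A = det A \<cdot>\<^sub>m 1\<^sub>m N" using adj_mat(3)[OF A] .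
  have e: "(\<Sum>k<N. cofactor A k l * A $$ (k, i)) = (if l = i then det A else 0)" if i: "i < N" for i
  proof -
    have "(adj_mat A * A) $$ (l, i) = (if l = i then det A else 0)"
      unfolding adj using l i by simp
    moreover have "(adj_mat A * A) $$ (l, i) = (\<Sum>k<N. cofactor A k l * A $$ (k, i))"
      using A l i by (simp add: adj_mat_def scalar_prod_def atLeast0LessThan)
    ultimately show ?thesis by simp
  qed
  have "(\<Sum>i<N. (if l = i then det A else 0) * x i) = (\<Sum>i<N. if i = l then det A * x i else 0)"
    by (intro sum.cong) auto
  then have "det A * x l = (\<Sum>i<N. (if l = i then det A else 0) * x i)"
    using l by (simp add: sum.delta)
  also have "\<dots> = (\<Sum>i<N. \<Sum>k<N. cofactor A k l * A $$ (k, i) * x i)"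
  proof (intro sum.cong refl)
    fix i assume "i \<in> {..<N}"
    then show "(if l = i then det A else 0) * x i = (\<Sum>k<N. cofactor A k l * A $$ (k, i) * x i)"
    proof -
      have "(if l = i then det A else 0) * x i = (\<Sum>k<N. cofactor A k l * A $$ (k, i)) * x i"
        using e[of i] \<open>i \<in> {..<N}\<close> by simp
      also have "\<dots> = (\<Sum>k<N. cofactor A k l * A $$ (k, i) * x i)" by (simp add: sum_distrib_right)
      finally show ?thesis .
    qed
  qed
  also have "\<dots> = (\<Sum>k<N. cofactor A k l * (\<Sum>i<N. A $$ (k, i) * x i))"
    by (subst sum.swap) (simp add: sum_distrib_left mult.assoc)
  also have "\<dots> = (\<Sum>k<N. cofactor A k l * (if k = r then 1 else 0))"
    by (intro sum.cong refl) (simp add: sol)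
  also have "\<dots> = (\<Sum>k<N. if k = r then cofactor A k l else 0)"
    by (intro sum.cong) auto
  also have "\<dots> = cofactor A r l" using r by (simp add: sum.delta)
  finally show ?thesis by simp
qed

lemma Amat_sum:
  assumes "i \<le> n"
  shows "(\<Sum>j<n+1. Amat n $$ (i, j) * x j) = (\<Sum>j\<le>n. tt (dst i j) * x j)"
  using assms by (simp add: lessThan_Suc_atMost[symmetric] Amat_index)

lemma cN_eq:
  assumes "l \<le> n"
  shows "cofactor (Amat n) 0 l = Dd (n + 1) * vN n l"
proof -
  have "cofactor (Amat n) 0 l = det (Amat n) * vN n l"
  proof (rule cof_sol[OF Amat_carrier])
    fix i assume "i < n + 1"
    then have "(\<Sum>j<n+1. Amat n $$ (i, j) * vN n j) = (\<Sum>j\<le>n. tt (dst i j) * vN n j)"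
      by (intro Amat_sum) simp
    then show "(\<Sum>j<n+1. Amat n $$ (i, j) * vN n j) = (if i = 0 then 1 else 0)"
      using rowv[of i n] \<open>i < n + 1\<close> by simp
  qed (use assms in auto)
  then show ?thesis by (simp add: Dd_def)
qed

lemma dN_eq:
  assumes "l \<le> n"
  shows "cofactor (Amat n) n l = Dd (n + 1) * uN n l"
proof -
  have "cofactor (Amat n) n l = det (Amat n) * uN n l"
  proof (rule cof_sol[OF Amat_carrier])
    fix i assume "i < n + 1"
    then have "(\<Sum>j<n+1. Amat n $$ (i, j) * uN n j) = (\<Sum>j\<le>n. tt (dst i j) * uN n j)"
      by (intro Amat_sum) simp
    then show "(\<Sum>j<n+1. Amat n $$ (i, j) * uN n j) = (if i = n then 1 else 0)"
      using rowu[of i n] \<open>i < n + 1\<close> by simp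
  qed (use assms in auto)
  then show ?thesis by (simp add: Dd_def)
qed

lemma cof00: "cofactor (Amat n) 0 0 = Dd n"
proof (cases n)
  case 0
  have "mat_delete (Amat 0) 0 0 = 1\<^sub>m 0" by (rule eq_matI) (auto simp: Amat_def)
  then show ?thesis using 0 by (simp add: cofactor_def Dd_def)
next
  case (Suc m)
  have "mat_delete (Amat (Suc m)) 0 0 = Amat m"
    by (rule eq_matI) (auto simp: Amat_def mat_delete_def Let_def)
  then show ?thesis using Suc by (simp add: cofactor_def Dd_def)
qed

lemma dd_step: fixes x :: real assumes "x \<ge> 0"
  shows "(x+1)*(x+2)^2*(x+3)/12 * ((x+3)*(x+4)) / ((x+1)*(x+2)) = ((x+1)+1)*((x+1)+2)^2*((x+1)+3)/12"
proof -
  have "x + 1 \<noteq> 0" "x + 2 \<noteq> 0" using assms by linarith+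
  then show ?thesis by (simp add: divide_simps) (simp add: algebra_simps power2_eq_square)
qed

lemma Dd_formula: "Dd n = (real n + 1) * (real n + 2)^2 * (real n + 3) / 12"
proof (induction n)
  case 0
  then show ?case by (simp add: Dd_def)
next
  case (Suc n)
  have v0: "vN n 0 = (real n+1)*(real n+2)/((real n+3)*(real n+4))" by (simp add: vN_def vv_def)
  have "Dd n = Dd (n + 1) * vN n 0" using cN_eq[of 0 n] cof00[of n] by simp
  then have "Dd n = Dd (Suc n) * ((real n+1)*(real n+2)/((real n+3)*(real n+4)))"
    unfolding v0 by simp
  moreover have "(real n+3)*(real n+4) \<noteq> 0" by simp
  ultimately have "Dd (Suc n) * ((real n+1)*(real n+2)) = Dd n * ((real n+3)*(real n+4))"
    by (simp add: field_simps)
  moreover have d: "(real n+1)*(real n+2) \<noteq> 0" by simp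
  moreover have "Dd (Suc n) = (Dd (Suc n) * ((real n+1)*(real n+2))) / ((real n+1)*(real n+2))"
    using d by simp
  ultimately have "Dd (Suc n) = Dd n * ((real n+3)*(real n+4)) / ((real n+1)*(real n+2))"
    by simp
  also have "\<dots> = (real (Suc n) + 1) * (real (Suc n) + 2)^2 * (real (Suc n) + 3) / 12"
  proof -
    have s: "real (Suc n) = real n + 1" by simp
    show ?thesis unfolding Suc.IH s by (rule dd_step) simp
  qed
  finally show ?case .
qed




definition sN :: "nat \<Rightarrow> real" where "sN n = 1 / sqrt (Dd (n+1) * Dd n)"

lemma Dd_pos: "Dd n > 0"
  unfolding Dd_formula by (simp add: zero_less_mult_iff)

lemma Dd0: "Dd 0 = 1" and Dd1: "Dd (Suc 0) = 6"
  by (simp_all add: Dd_formula)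

lemma phi_eq: "phi n = (\<lambda>x y. sN n * (\<Sum>j\<le>n. cofactor (Amat n) 0 j * Q j (n - j) x y))"
proof (cases "n = 0")
  case True
  then show ?thesis using cof00[of 0]
    by (simp add: phi_def pscale_def sN_def Q0 H2_norm_pp Dd0 Dd1 fun_eq_iff)
next
  case False
  then show ?thesis by (simp add: phi_def pscale_def sN_def Q_def fun_eq_iff)
qed

lemma psi_eq: "psi n = (\<lambda>x y. sN n * (\<Sum>j\<le>n. cofactor (Amat n) n j * Q j (n - j) x y))"
proof (cases "n = 0")
  case True
  then show ?thesis using cof00[of 0]
    by (simp add: psi_def pscale_def sN_def Q0 H2_norm_pp Dd0 Dd1 fun_eq_iff)
next
  case False
  then show ?thesis by (simp add: psi_def pscale_def sN_def Q_def fun_eq_iff)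
qed

lemma lhs_eq: "pmul (mono 0 2) (phi n) = (\<lambda>x y. sN n * (\<Sum>j\<le>n. cofactor (Amat n) 0 j * Q j (n - j + 2) x y))"
proof (intro ext)
  fix x y
  show "pmul (mono 0 2) (phi n) x y = sN n * (\<Sum>j\<le>n. cofactor (Amat n) 0 j * Q j (n - j + 2) x y)"
    unfolding pmul_mono_left phi_eq Q_shift_w[symmetric] by (cases "2 \<le> y") simp_all
qed

lemma rhs_eq: "pmul (mono 2 0) (psi n) = (\<lambda>x y. sN n * (\<Sum>k\<le>n. cofactor (Amat n) n k * Q (k + 2) (n - k) x y))"
proof (intro ext)
  fix x y
  show "pmul (mono 2 0) (psi n) x y = sN n * (\<Sum>k\<le>n. cofactor (Amat n) n k * Q (k + 2) (n - k) x y)"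
    unfolding pmul_mono_left psi_eq Q_shift_z[symmetric] by (cases "2 \<le> x") simp_all
qed

lemma inner_eq:
  "H2_inner (pmul (mono 0 2) (phi n)) (pmul (mono 2 0) (psi n)) =
     (sN n)^2 * (\<Sum>j\<le>n. \<Sum>k\<le>n. cofactor (Amat n) 0 j * cofactor (Amat n) n k * tt (dst j (k + 2)))"
proof -
  define c where "c j = cofactor (Amat n) 0 j" for j
  define d where "d k = cofactor (Amat n) n k" for k
  define F where "F x y = (\<Sum>j\<le>n. c j * Q j (n - j + 2) x y)" for x y
  define G where "G x y = (\<Sum>k\<le>n. d k * Q (k + 2) (n - k) x y)" for x y
  have FQ: "F x y = 0" if "(x, y) \<notin> bx (n + 4)" for x y
    unfolding F_def
  proof (intro sum.neutral ballI)
    fix j assume "j \<in> {..n}"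
    have "Q j (n - j + 2) x y = 0"
    proof (rule ccontr)
      assume "Q j (n - j + 2) x y \<noteq> 0"
      then have "x + y = j + (n - j + 2) + 2" by (rule Q_supp)
      with \<open>j \<in> {..n}\<close> that show False by (auto simp: bx_def)
    qed
    then show "c j * Q j (n - j + 2) x y = 0" by simp
  qed
  have L: "pmul (mono 0 2) (phi n) = (\<lambda>x y. sN n * F x y)"
    unfolding lhs_eq F_def c_def ..
  have R: "pmul (mono 2 0) (psi n) = (\<lambda>x y. sN n * G x y)"
    unfolding rhs_eq G_def d_def ..
  have "H2_inner (pmul (mono 0 2) (phi n)) (pmul (mono 2 0) (psi n)) =
      (\<Sum>z\<in>bx (n+4). (sN n * F (fst z) (snd z)) * (sN n * G (fst z) (snd z)))"
    unfolding L R
  proof (rule H2_inner_fin)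
    show "finite (bx (n + 4))" by (simp add: bx_def)
  next
    fix x y assume "(x, y) \<notin> bx (n + 4)"
    then show "sN n * F x y * (sN n * G x y) = 0" using FQ by simp
  qed
  also have "\<dots> = (sN n)^2 * (\<Sum>z\<in>bx (n+4). F (fst z) (snd z) * G (fst z) (snd z))"
    by (simp add: sum_distrib_left power2_eq_square mult_ac)
  also have "(\<Sum>z\<in>bx (n+4). F (fst z) (snd z) * G (fst z) (snd z)) =
      (\<Sum>z\<in>bx (n+4). \<Sum>j\<le>n. \<Sum>k\<le>n. c j * d k * (Q j (n - j + 2) (fst z) (snd z) * Q (k + 2) (n - k) (fst z) (snd z)))"
    unfolding F_def G_def sum_product by (intro sum.cong refl) (simp add: mult_ac)
  also have "\<dots> = (\<Sum>j\<le>n. \<Sum>z\<in>bx (n+4). \<Sum>k\<le>n. c j * d k * (Q j (n - j + 2) (fst z) (snd z) * Q (k + 2) (n - k) (fst z) (snd z)))"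
    by (rule sum.swap)
  also have "\<dots> = (\<Sum>j\<le>n. \<Sum>k\<le>n. \<Sum>z\<in>bx (n+4). c j * d k * (Q j (n - j + 2) (fst z) (snd z) * Q (k + 2) (n - k) (fst z) (snd z)))"
    by (intro sum.cong refl) (rule sum.swap)
  also have "\<dots> = (\<Sum>j\<le>n. \<Sum>k\<le>n. c j * d k * (\<Sum>z\<in>bx (n+4). Q j (n - j + 2) (fst z) (snd z) * Q (k + 2) (n - k) (fst z) (snd z)))"
    by (simp only: sum_distrib_left)
  also have "\<dots> = (\<Sum>j\<le>n. \<Sum>k\<le>n. c j * d k * tt (dst j (k + 2)))"
  proof (intro sum.cong refl)
    fix j k assume "j \<in> {..n}" "k \<in> {..n}"
    then show "c j * d k * (\<Sum>z\<in>bx (n+4). Q j (n - j + 2) (fst z) (snd z) * Q (k + 2) (n - k) (fst z) (snd z))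
        = c j * d k * tt (dst j (k + 2))"
      by (subst gram) auto
  qed
  finally show ?thesis unfolding c_def d_def .
qed

lemma dst_sym: "dst i j = dst j i" unfolding dst_def by auto

lemma X_eq:
  "(\<Sum>j\<le>n. \<Sum>k\<le>n. cofactor (Amat n) 0 j * cofactor (Amat n) n k * tt (dst j (k + 2)))
   = (Dd (n+1))^2 * (\<Sum>k\<le>n. uN n k * (\<Sum>j\<le>n. tt (dst (k + 2) j) * vN n j))"
proof -
  have "(\<Sum>j\<le>n. \<Sum>k\<le>n. cofactor (Amat n) 0 j * cofactor (Amat n) n k * tt (dst j (k + 2)))
     = (\<Sum>j\<le>n. \<Sum>k\<le>n. (Dd (n+1))^2 * (uN n k * (tt (dst (k + 2) j) * vN n j)))"
    by (intro sum.cong refl) (simp add: cN_eq dN_eq dst_sym power2_eq_square mult_ac)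
  also have "\<dots> = (Dd (n+1))^2 * (\<Sum>k\<le>n. uN n k * (\<Sum>j\<le>n. tt (dst (k + 2) j) * vN n j))"
    by (subst sum.swap) (simp only: sum_distrib_left)
  finally show ?thesis .
qed




lemma basel_shift:
  "(\<lambda>n::nat. 1 / (real n + 2)^2) sums (pi^2/6 - 1)"
  "(\<lambda>n::nat. 1 / (real n + 3)^2) sums (pi^2/6 - 5/4)"
  "(\<lambda>n::nat. 1 / (real n + 4)^2) sums (pi^2/6 - 49/36)"
proof -
  have b: "(\<lambda>n::nat. 1 / (real n + 1)^2) sums (pi^2/6)"
    using inverse_squares_sums by (simp add: add.commute)
  have 2: "(\<lambda>n::nat. 1 / (real (Suc n) + 1)^2) sums (pi^2/6 - 1)"
    by (subst sums_Suc_iff) (use b in simp)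
  then show "(\<lambda>n::nat. 1 / (real n + 2)^2) sums (pi^2/6 - 1)"
    by (simp add: add_ac)
  have 3: "(\<lambda>n::nat. 1 / (real (Suc n) + 2)^2) sums (pi^2/6 - 5/4)"
    by (subst sums_Suc_iff) (use 2 in \<open>simp add: add_ac\<close>)
  then show "(\<lambda>n::nat. 1 / (real n + 3)^2) sums (pi^2/6 - 5/4)"
    by (simp add: add_ac)
  have "(\<lambda>n::nat. 1 / (real (Suc n) + 3)^2) sums (pi^2/6 - 49/36)"
    by (subst sums_Suc_iff) (use 3 in \<open>simp add: add_ac\<close>)
  then show "(\<lambda>n::nat. 1 / (real n + 4)^2) sums (pi^2/6 - 49/36)"
    by (simp add: add_ac)
qed

lemma tele:
  fixes k :: real assumes "k > 0"
  shows "(\<lambda>n::nat. 1 / (real n + k) - 1 / (real n + k + 1)) sums (1 / k)"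
proof -
  have "filterlim (\<lambda>n::nat. k + real n) at_top sequentially"
    by (rule filterlim_tendsto_add_at_top[OF tendsto_const filterlim_real_sequentially])
  then have "filterlim (\<lambda>n::nat. k + real n) at_infinity sequentially"
    by (rule filterlim_at_top_imp_at_infinity)
  then have "(\<lambda>n::nat. 1 / (k + real n)) \<longlonglongrightarrow> 0"
    by (rule tendsto_divide_0[OF tendsto_const])
  from telescope_sums'[OF this] show ?thesis by (simp add: add_ac)
qed

lemma final_series:
  "(\<lambda>n::nat. (2 * ((real n)^2 + 5 * real n - 2) / ((real n + 2) * (real n + 3) * (real n + 4)))^2)
     sums (178 / 3 * pi\<^sup>2 - 585)"
proof -
  have t2: "(\<lambda>n::nat. 1 / (real n + 2) - 1 / (real n + 3)) sums (1/2)"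
    using tele[of 2] by (simp add: add_ac)
  have t3: "(\<lambda>n::nat. 1 / (real n + 3) - 1 / (real n + 4)) sums (1/3)"
    using tele[of 3] by (simp add: add_ac)
  have s: "(\<lambda>n::nat. 64 * (1 / (real n + 2)^2) + 256 * (1 / (real n + 3)^2) + 36 * (1 / (real n + 4)^2)
      - 208 * (1 / (real n + 2) - 1 / (real n + 3)) - 144 * (1 / (real n + 3) - 1 / (real n + 4)))
     sums (64 * (pi^2/6 - 1) + 256 * (pi^2/6 - 5/4) + 36 * (pi^2/6 - 49/36) - 208 * (1/2) - 144 * (1/3))"
    by (intro sums_add sums_diff sums_mult basel_shift t2 t3)
  have e: "(2 * ((real n)^2 + 5 * real n - 2) / ((real n + 2) * (real n + 3) * (real n + 4)))^2 =
     64 * (1 / (real n + 2)^2) + 256 * (1 / (real n + 3)^2) + 36 * (1 / (real n + 4)^2)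
      - 208 * (1 / (real n + 2) - 1 / (real n + 3)) - 144 * (1 / (real n + 3) - 1 / (real n + 4))" for n
  proof -
    have p: "real n + 2 \<noteq> 0" "real n + 3 \<noteq> 0" "real n + 4 \<noteq> 0" by linarith+
    show ?thesis using p by (simp add: divide_simps power2_eq_square) (simp add: algebra_simps)
  qed
  show ?thesis using s unfolding e[symmetric] by (simp add: algebra_simps)
qed



lemma final_alg: fixes x :: real assumes "x \<ge> 0"
  shows "((x+2)*(x+3)^2*(x+4)/12) / ((x+1)*(x+2)^2*(x+3)/12) * (vv x 1 * (vv x (x-1) - 4 * vv x x) + vv x 0 * vv x x)
     = - (2 * (x^2 + 5 * x - 2) / ((x + 2) * (x + 3) * (x + 4)))"
proof -
  have "x + 1 \<noteq> 0" "x + 2 \<noteq> 0" "x + 3 \<noteq> 0" "x + 4 \<noteq> 0" using assms by linarith+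
  then show ?thesis unfolding vv_def by (simp add: divide_simps) (simp add: algebra_simps power2_eq_square)
qed

lemma sN_sq: "(sN n)^2 = 1 / (Dd (n+1) * Dd n)"
proof -
  have "Dd (n+1) * Dd n > 0" using Dd_pos by simp
  then show ?thesis unfolding sN_def by (simp add: power_divide)
qed

lemma inner_val:
  "H2_inner (pmul (mono 0 2) (phi n)) (pmul (mono 2 0) (psi n)) =
     - (2 * ((real n)^2 + 5 * real n - 2) / ((real n + 2) * (real n + 3) * (real n + 4)))"
proof -
  define R where "R i = (\<Sum>j\<le>n. tt (dst i j) * vN n j)" for i
  define X where "X = (\<Sum>k\<le>n. uN n k * R (k + 2))"
  have "H2_inner (pmul (mono 0 2) (phi n)) (pmul (mono 2 0) (psi n)) =
     1 / (Dd (n+1) * Dd n) * ((Dd (n+1))^2 * X)"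
    unfolding inner_eq X_eq sN_sq X_def R_def ..
  also have "\<dots> = Dd (n+1) / Dd n * X"
    using Dd_pos[of n] Dd_pos[of "n+1"] by (simp add: power2_eq_square field_simps)
  finally have I: "H2_inner (pmul (mono 0 2) (phi n)) (pmul (mono 2 0) (psi n)) = Dd (n+1) / Dd n * X" .
  show ?thesis
  proof (cases n)
    case 0
    have "R 2 = vN n 0" unfolding R_def row5 using 0 by simp
    then have r: "R (Suc (Suc 0)) = vN 0 0" using 0 by (simp add: numeral_2_eq_2)
    have "X = uN 0 0 * vN 0 0" unfolding X_def using 0 r by simp
    then show ?thesis unfolding I using 0 by (simp add: Dd0 Dd1 uN_def vN_def vv_def)
  next
    case (Suc m)
    have R0: "R (k + 2) = 0" if "k < m" for k
      unfolding R_def using rowv[of "k+2" n] that Suc by simp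
    have R1: "R (m + 2) = vN n m - 4 * vN n (m + 1)" unfolding R_def row5 using Suc by simp
    have R2: "R (m + 3) = vN n (m + 1)" unfolding R_def row5 using Suc by (simp add: numeral_3_eq_3)
    have "X = (\<Sum>k<m. uN n k * R (k + 2)) + uN n m * R (m + 2) + uN n (m + 1) * R (m + 3)"
      unfolding X_def Suc lessThan_Suc_atMost[symmetric] by (simp add: numeral_3_eq_3)
    also have "(\<Sum>k<m. uN n k * R (k + 2)) = 0" by (rule sum.neutral) (use R0 in auto)
    finally have X: "X = uN n m * (vN n m - 4 * vN n (m + 1)) + uN n (m + 1) * vN n (m + 1)"
      unfolding R1 R2 by simp
    define x where "x = real n"
    have x0: "x \<ge> 0" unfolding x_def by simp
    have m: "real m = x - 1" "real (m + 1) = x" unfolding x_def Suc by simp_all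
    have v: "uN n m = vv x 1" "uN n (m+1) = vv x 0" "vN n m = vv x (x - 1)" "vN n (m+1) = vv x x"
      unfolding uN_def vN_def m by (simp_all add: x_def Suc)
    have D: "Dd (n+1) = (x+2)*(x+3)^2*(x+4)/12" "Dd n = (x+1)*(x+2)^2*(x+3)/12"
      unfolding Dd_formula x_def by (simp_all add: add_ac)
    show ?thesis unfolding I X v D using final_alg[OF x0] unfolding x_def by simp
  qed
qed

lemma Sigma_val:
  "Sigma_term 2 n = (2 * ((real n)^2 + 5 * real n - 2) / ((real n + 2) * (real n + 3) * (real n + 4)))^2"
  unfolding Sigma_term_def inner_val by (simp add: power2_eq_square)

theorem theorem3p3:
  shows "(Sigma_term 2) sums (178 / 3 * pi\<^sup>2 - 585)"
  unfolding Sigma_val[abs_def] by (rule final_series)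


end
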